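(* Let $f\ge0$ be integrable on $[-\pi,\pi]$ with $\int f>0$ and such that $\lim_{n\to\infty}\sigma_{n+1}^2(f)/\sigma_n^2(f)=1$, and let $p_n$ be the optimal polynomial for $f$. If $g$ is a nonnegative, bounded, measurable function on $[-\pi,\pi]$ that is continuous at $\lambda=0$, then $$\lim_{n\to\infty}\frac{\mathrm{Var}_{fg}(\widehat m_f)}{\sigma_n^2(f)}=g(0),\qquad \mathrm{Var}_{fg}(\widehat m_f):=\int_{-\pi}^{\pi}|p_n(e^{i\lambda})|^2f(\lambda)g(\lambda)\,d\lambda .$$
   Context: $\sigma_n^2(f)=\min_{q\in\mathcal{Q}_n(1)}\int_{-\pi}^{\pi}|q(e^{i\lambda})|^2f(\lambda)\,d\lambda$, with $\mathcal{Q}_n(1)$ the complex polynomials of degree at most $n$ satisfying $q(1)=1$; $p_n$ is the unique minimizer. $\mathrm{Var}_{fg}(\widehat m_f)$ is the variance, under spectral density $fg$, of the BLUE of the mean computed assuming spectral density $f$. *)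

theory Defs
  imports "HOL-Analysis.Analysis" "HOL-Computational_Algebra.Polynomial"
begin

definition Qn1 :: "nat \<Rightarrow> complex poly set" where
  "Qn1 n = {q. degree q \<le> n \<and> poly q 1 = 1}"

definition qform :: "(real \<Rightarrow> real) \<Rightarrow> complex poly \<Rightarrow> real" where
  "qform w q = (LINT x:{-pi..pi}|lborel. (cmod (poly q (cis x)))^2 * w x)"

definition sigma2 :: "(real \<Rightarrow> real) \<Rightarrow> nat \<Rightarrow> real" where
  "sigma2 f n = (INF q \<in> Qn1 n. qform f q)"

definition opt_poly :: "(real \<Rightarrow> real) \<Rightarrow> nat \<Rightarrow> complex poly" where
  "opt_poly f n = (THE p. p \<in> Qn1 n \<and> (\<forall>q \<in> Qn1 n. qform f p \<le> qform f q))"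

definition var_mis :: "(real \<Rightarrow> real) \<Rightarrow> (real \<Rightarrow> real) \<Rightarrow> nat \<Rightarrow> real" where
  "var_mis f g n = qform (\<lambda>x. f x * g x) (opt_poly f n)"

end

theory Submission
  imports Defs
begin

lemma set_integrable_bdd_mult:
  fixes G :: "real \<Rightarrow> 'a::{real_normed_field, banach, second_countable_topology}"
    and F :: "real \<Rightarrow> real"
  assumes f: "set_integrable lborel S F" and G: "set_borel_measurable lborel S G"
    and B: "\<forall>x\<in>S. norm (G x) \<le> B"
  shows "set_integrable lborel S (\<lambda>x. G x * of_real (F x))"
proof -
  have i: "integrable lborel (\<lambda>x. indicator S x *\<^sub>R F x)" using f by (simp add: set_integrable_def)
  then have m: "(\<lambda>x. indicator S x *\<^sub>R F x) \<in> borel_measurable lborel" by auto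
  have eq: "(\<lambda>x. indicator S x *\<^sub>R (G x * of_real (F x))) = (\<lambda>x. (indicator S x *\<^sub>R G x) * of_real (indicator S x *\<^sub>R F x))"
    by (auto simp: indicator_def)
  have G': "(\<lambda>x. indicator S x *\<^sub>R G x) \<in> borel_measurable lborel" using G by (simp add: set_borel_measurable_def)
  have 1: "integrable lborel (\<lambda>x. B * (indicator S x *\<^sub>R F x))" using i by auto
  have 2: "(\<lambda>x. indicator S x *\<^sub>R (G x * of_real (F x))) \<in> borel_measurable lborel"
      unfolding eq using m G' by measurable
  have 3: "AE x in lborel. norm (indicator S x *\<^sub>R (G x * of_real (F x))) \<le> norm (B * (indicator S x *\<^sub>R F x))"
    proof (rule AE_I2)
      fix x show "norm (indicator S x *\<^sub>R (G x * of_real (F x))) \<le> norm (B * (indicator S x *\<^sub>R F x))"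
      proof (cases "x \<in> S")
        case True
        then have "norm (G x) * \<bar>F x\<bar> \<le> B * \<bar>F x\<bar>" using B by (auto intro: mult_right_mono)
        also have "\<dots> \<le> \<bar>B\<bar> * \<bar>F x\<bar>" by (auto intro: mult_right_mono)
        finally show ?thesis using True by (simp add: norm_mult abs_mult)
      qed simp
    qed
  show ?thesis unfolding set_integrable_def using Bochner_Integration.integrable_bound[OF 1 2 3] .
qed

lemma meas_poly_cis: "(\<lambda>x. poly p (cis x)) \<in> borel_measurable lborel"
  unfolding measurable_lborel2 by (intro borel_measurable_continuous_onI continuous_intros)

lemma poly_cis_bdd: "\<exists>C. \<forall>x\<in>{-pi..pi}. norm (poly p (cis x)) \<le> C"
proof -
  have "compact ((\<lambda>x. poly p (cis x)) ` {-pi..pi})"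
    by (intro compact_continuous_image continuous_intros) auto
  then show ?thesis by (auto dest!: compact_imp_bounded simp: bounded_iff)
qed

lemma setmeas_global: fixes h :: "real \<Rightarrow> 'b::{real_normed_vector, second_countable_topology}" assumes [measurable]: "h \<in> borel_measurable borel" shows "set_borel_measurable lborel {a..b::real} h"
  unfolding set_borel_measurable_def by measurable

definition ipf :: "(real \<Rightarrow> real) \<Rightarrow> complex poly \<Rightarrow> complex poly \<Rightarrow> complex" where
  "ipf f p q = (LINT x:{-pi..pi}|lborel. poly p (cis x) * cnj (poly q (cis x)) * complex_of_real (f x))"

lemma ipf_integrable:
  assumes "set_integrable lborel {-pi..pi} f"
  shows "set_integrable lborel {-pi..pi} (\<lambda>x. poly p (cis x) * cnj (poly q (cis x)) * complex_of_real (f x))"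
proof -
  obtain C1 where C1: "\<forall>x\<in>{-pi..pi}. norm (poly p (cis x)) \<le> C1" using poly_cis_bdd by blast
  obtain C2 where C2: "\<forall>x\<in>{-pi..pi}. norm (poly q (cis x)) \<le> C2" using poly_cis_bdd by blast
  have "\<forall>x\<in>{-pi..pi}. norm (poly p (cis x) * cnj (poly q (cis x))) \<le> C1 * C2"
    using C1 C2 by (auto simp: norm_mult intro!: mult_mono order.trans[OF norm_ge_zero])
  moreover have "set_borel_measurable lborel {-pi..pi} (\<lambda>x. poly p (cis x) * cnj (poly q (cis x)))"
    by (rule setmeas_global, intro borel_measurable_continuous_onI continuous_intros)
  ultimately show ?thesis using set_integrable_bdd_mult[OF assms] by blast
qed

context
  fixes f :: "real \<Rightarrow> real"
  assumes fi: "set_integrable lborel {-pi..pi} f"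
begin

lemma ipf_add1: "ipf f (p + q) r = ipf f p r + ipf f q r"
proof -
  have "ipf f (p + q) r = (LINT x:{-pi..pi}|lborel. poly p (cis x) * cnj (poly r (cis x)) * complex_of_real (f x)
        + poly q (cis x) * cnj (poly r (cis x)) * complex_of_real (f x))"
    unfolding ipf_def by (simp add: algebra_simps)
  also have "\<dots> = ipf f p r + ipf f q r"
    unfolding ipf_def by (rule set_integral_add(2)[OF ipf_integrable[OF fi] ipf_integrable[OF fi]])
  finally show ?thesis .
qed

lemma ipf_smult1: "ipf f (smult c p) r = c * ipf f p r"
proof -
  have "ipf f (smult c p) r = (LINT x:{-pi..pi}|lborel. c * (poly p (cis x) * cnj (poly r (cis x)) * complex_of_real (f x)))"
    unfolding ipf_def by (simp add: algebra_simps)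
  also have "\<dots> = c * ipf f p r"
    unfolding ipf_def by (rule set_integral_mult_right)
  finally show ?thesis .
qed

lemma ipf_cnj: "ipf f q p = cnj (ipf f p q)"
proof -
  have "ipf f q p = (LINT x:{-pi..pi}|lborel. cnj (poly p (cis x) * cnj (poly q (cis x)) * complex_of_real (f x)))"
    unfolding ipf_def by (simp add: algebra_simps)
  also have "\<dots> = cnj (ipf f p q)"
    unfolding ipf_def set_lebesgue_integral_def
    by (subst Bochner_Integration.integral_cnj[symmetric], rule Bochner_Integration.integral_cong) auto
  finally show ?thesis .
qed

lemma ipf_add2: "ipf f r (p + q) = ipf f r p + ipf f r q"
  by (metis ipf_cnj ipf_add1 complex_cnj_add)

lemma ipf_smult2: "ipf f r (smult c p) = cnj c * ipf f r p"
  by (metis ipf_cnj ipf_smult1 complex_cnj_mult)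

lemma ipf_diff1: "ipf f (p - q) r = ipf f p r - ipf f q r"
  by (metis ipf_add1 diff_add_cancel eq_diff_eq)

lemma ipf_diff2: "ipf f r (p - q) = ipf f r p - ipf f r q"
  by (metis ipf_add2 diff_add_cancel eq_diff_eq)

lemma ipf_zero2: "ipf f r 0 = 0"
  using ipf_smult2[of r 0 0] by simp

lemma qform_integrable: "set_integrable lborel {-pi..pi} (\<lambda>x. (cmod (poly p (cis x)))^2 * f x)"
proof -
  obtain C where C: "\<forall>x\<in>{-pi..pi}. norm (poly p (cis x)) \<le> C" using poly_cis_bdd by blast
  have "\<forall>x\<in>{-pi..pi}. norm ((cmod (poly p (cis x)))^2) \<le> C^2"
    using C by (auto intro!: power_mono)
  moreover have "set_borel_measurable lborel {-pi..pi} (\<lambda>x. (cmod (poly p (cis x)))^2)"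
    by (rule setmeas_global, intro borel_measurable_continuous_onI continuous_intros)
  ultimately show ?thesis using set_integrable_bdd_mult[OF fi] by fastforce
qed

lemma ipf_self: "ipf f p p = complex_of_real (qform f p)"
proof -
  have "ipf f p p = (LINT x:{-pi..pi}|lborel. complex_of_real ((cmod (poly p (cis x)))^2 * f x))"
    unfolding ipf_def by (intro set_lebesgue_integral_cong) (auto simp: complex_norm_square[symmetric])
  also have "\<dots> = complex_of_real (qform f p)"
    unfolding qform_def by (rule set_integral_complex_of_real)
  finally show ?thesis .
qed

end

lemma set_int_nonneg:
  fixes F :: "real \<Rightarrow> real"
  assumes "\<And>x. x \<in> S \<Longrightarrow> F x \<ge> 0"
  shows "(LINT x:S|lborel. F x) \<ge> 0"
  unfolding set_lebesgue_integral_def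
  by (rule Bochner_Integration.integral_nonneg_AE, rule AE_I2) (auto simp: assms indicator_def)

context
  fixes f :: "real \<Rightarrow> real"
  assumes fi: "set_integrable lborel {-pi..pi} f"
    and fnn: "\<And>x. x \<in> {-pi..pi} \<Longrightarrow> f x \<ge> 0"
    and fpos: "(LINT x:{-pi..pi}|lborel. f x) > 0"
begin

lemma qform_nonneg: "qform f p \<ge> 0"
  unfolding qform_def by (rule set_int_nonneg) (auto intro!: mult_nonneg_nonneg fnn)

lemma qform_pos:
  assumes "p \<noteq> 0" shows "qform f p > 0"
proof (rule ccontr)
  assume "\<not> qform f p > 0"
  then have q0: "qform f p = 0" using qform_nonneg[of p] by linarith
  let ?F = "\<lambda>x. indicator {-pi..pi} x *\<^sub>R ((cmod (poly p (cis x)))^2 * f x)"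
  have "integrable lborel ?F" using qform_integrable[OF fi, of p] by (simp add: set_integrable_def)
  moreover have "AE x in lborel. 0 \<le> ?F x" by (rule AE_I2) (auto simp: indicator_def fnn)
  ultimately have "integral\<^sup>L lborel ?F = 0 \<longleftrightarrow> (AE x in lborel. ?F x = 0)"
    by (rule integral_nonneg_eq_0_iff_AE)
  with q0 have ae: "AE x in lborel. ?F x = 0" unfolding qform_def set_lebesgue_integral_def by simp
  define Z where "Z = insert (-pi) (Arg ` {z. poly p z = 0})"
  have "finite Z" unfolding Z_def using poly_roots_finite[OF assms] by auto
  then have "AE x in lborel. x \<notin> Z" by (intro AE_not_in finite_imp_null_set_lborel)
  with ae have "AE x in lborel. indicator {-pi..pi} x *\<^sub>R f x = 0"
  proof (eventually_elim)
    case (elim x)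
    show ?case
    proof (cases "x \<in> {-pi..pi}")
      case True
      then have x: "x \<in> {-pi<..pi}" using elim(2) unfolding Z_def by auto
      have "poly p (cis x) \<noteq> 0"
      proof
        assume "poly p (cis x) = 0"
        then have "Arg (cis x) \<in> Arg ` {z. poly p z = 0}" by auto
        then show False using Arg_cis[OF x] elim(2) unfolding Z_def by auto
      qed
      then show ?thesis using elim(1) True by (auto simp: indicator_def)
    qed (simp add: indicator_def)
  qed
  then have "(LINT x:{-pi..pi}|lborel. f x) = 0" unfolding set_lebesgue_integral_def
    by (rule integral_eq_zero_AE)
  with fpos show False by simp
qed


lemma riesz:
  assumes La: "\<And>p q. L (p + q) = L p + L q" and Ls: "\<And>c p. L (smult c p) = c * L p"
  shows "\<exists>r. degree r \<le> n \<and> (\<forall>q. degree q \<le> n \<longrightarrow> L q = ipf f q r)"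
  using La Ls
proof (induction n arbitrary: L)
  case 0
  define c where "c = cnj (L 1 / ipf f 1 1)"
  have i11: "ipf f 1 1 \<noteq> 0" using ipf_self[OF fi, of 1] qform_pos[of 1] by auto
  show ?case
  proof (intro exI[of _ "[:c:]"] conjI allI impI)
    show "degree [:c:] \<le> 0" by simp
    fix q :: "complex poly" assume "degree q \<le> 0"
    define a where "a = coeff q 0"
    have q: "q = smult a 1" using degree_0_id[of q] \<open>degree q \<le> 0\<close> by (auto simp: a_def)
    have cc: "[:c:] = smult c 1" by simp
    have "ipf f q [:c:] = ipf f (smult a 1) (smult c 1)" by (simp only: q cc)
    also have "\<dots> = a * (cnj c * ipf f 1 1)"
      by (simp only: ipf_smult1[OF fi, of a 1 "smult c 1"] ipf_smult2[OF fi, of 1 c 1])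
    also have "\<dots> = a * L 1" using i11 by (simp add: c_def)
    also have "\<dots> = L (smult a 1)" by (simp only: 0(2))
    also have "\<dots> = L q" by (simp only: q)
    finally show "L q = ipf f q [:c:]" by simp
  qed
next
  case (Suc n)
  have "\<exists>r. degree r \<le> n \<and> (\<forall>q. degree q \<le> n \<longrightarrow> ipf f q (monom 1 (Suc n)) = ipf f q r)"
    by (rule Suc.IH) (simp_all add: ipf_add1[OF fi] ipf_smult1[OF fi])
  then obtain s where s: "degree s \<le> n" "\<And>q. degree q \<le> n \<Longrightarrow> ipf f q (monom 1 (Suc n)) = ipf f q s"
    by blast
  obtain r0 where r0: "degree r0 \<le> n" "\<And>q. degree q \<le> n \<Longrightarrow> L q = ipf f q r0"
    using Suc.IH[of L] Suc.prems by blast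
  define h where "h = monom 1 (Suc n) - s"
  have hc: "coeff h (Suc n) = 1" using s(1) by (simp add: h_def coeff_eq_0)
  have hdeg: "degree h \<le> Suc n" unfolding h_def
    using s(1) by (intro degree_diff_le) (auto intro: order.trans[OF degree_monom_le])
  have h0: "h \<noteq> 0" using hc by auto
  have hperp: "\<And>q. degree q \<le> n \<Longrightarrow> ipf f q h = 0"
    by (simp add: h_def ipf_diff2[OF fi] s(2))
  define nh where "nh = ipf f h h"
  have nh0: "nh \<noteq> 0" using ipf_self[OF fi, of h] qform_pos[OF h0] by (auto simp: nh_def)
  define c where "c = cnj ((L h - ipf f h r0) / nh)"
  show ?case
  proof (intro exI[of _ "r0 + smult c h"] conjI allI impI)
    show "degree (r0 + smult c h) \<le> Suc n" using r0(1) hdeg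
      by (intro degree_add_le) (auto intro: order.trans[OF degree_smult_le])
    fix q :: "complex poly" assume q: "degree q \<le> Suc n"
    define a where "a = coeff q (Suc n)"
    define q0 where "q0 = q - smult a h"
    have q0deg: "degree q0 \<le> n"
    proof (rule degree_le, intro allI impI)
      fix i assume "n < i"
      then consider "i = Suc n" | "i > Suc n" by linarith
      then show "coeff q0 i = 0"
      proof cases
        case 1 then show ?thesis by (simp add: q0_def a_def hc)
      next
        case 2 then show ?thesis using q hdeg by (simp add: q0_def coeff_eq_0)
      qed
    qed
    have qeq: "q = q0 + smult a h" by (simp add: q0_def)
    have "ipf f (q0 + smult a h) (r0 + smult c h) = ipf f q0 r0 + cnj c * ipf f q0 h + a * (ipf f h r0 + cnj c * nh)"
      by (simp add: ipf_add1[OF fi] ipf_add2[OF fi] ipf_smult1[OF fi] ipf_smult2[OF fi] nh_def algebra_simps)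
    also have "\<dots> = L q0 + a * L h" using nh0 by (simp add: hperp q0deg r0(2) c_def)
    also have "\<dots> = L (q0 + smult a h)" by (simp add: Suc.prems)
    finally show "L q = ipf f q (r0 + smult c h)" using qeq by simp
  qed
qed

lemma opt_exists: "\<exists>p\<in>Qn1 n. \<forall>q\<in>Qn1 n. qform f q = qform f p + qform f (q - p)"
proof -
  obtain r where r: "degree r \<le> n" "\<And>q. degree q \<le> n \<Longrightarrow> poly q 1 = ipf f q r"
    using riesz[of "\<lambda>q. poly q 1" n] by auto
  have "ipf f 1 r = 1" using r(2)[of 1] by simp
  then have "r \<noteq> 0" using ipf_zero2[OF fi, of 1] by auto
  define \<rho> where "\<rho> = qform f r"
  have rho: "\<rho> > 0" unfolding \<rho>_def using qform_pos[OF \<open>r \<noteq> 0\<close>] .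
  have pr1: "poly r 1 = of_real \<rho>" using r(2)[of r] r(1) ipf_self[OF fi, of r] by (simp add: \<rho>_def)
  define p where "p = smult (of_real (1/\<rho>)) r"
  have pQ: "p \<in> Qn1 n" unfolding Qn1_def p_def using r(1) rho pr1
    by (auto intro: order.trans[OF degree_smult_le])
  show ?thesis
  proof (intro bexI[OF _ pQ] ballI)
    fix q assume qQ: "q \<in> Qn1 n"
    define d where "d = q - p"
    have dd: "degree d \<le> n" using qQ pQ unfolding d_def Qn1_def by (auto intro: degree_diff_le)
    have d1: "poly d 1 = 0" using qQ pQ unfolding d_def Qn1_def by auto
    have "ipf f d p = 0" unfolding p_def by (simp add: ipf_smult2[OF fi] r(2)[OF dd, symmetric] d1)
    moreover then have "ipf f p d = 0" using ipf_cnj[OF fi, of p d] by simp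
    ultimately have "ipf f (p + d) (p + d) = ipf f p p + ipf f d d"
      by (simp add: ipf_add1[OF fi] ipf_add2[OF fi])
    then have "complex_of_real (qform f q) = complex_of_real (qform f p + qform f d)"
      by (simp add: ipf_self[OF fi] d_def)
    then show "qform f q = qform f p + qform f (q - p)" unfolding d_def of_real_eq_iff .
  qed
qed


lemma opt_props:
  shows "opt_poly f n \<in> Qn1 n" "sigma2 f n = qform f (opt_poly f n)"
    "\<And>q. q \<in> Qn1 n \<Longrightarrow> qform f (opt_poly f n) \<le> qform f q"
proof -
  obtain p where pQ: "p \<in> Qn1 n" and pe: "\<And>q. q \<in> Qn1 n \<Longrightarrow> qform f q = qform f p + qform f (q - p)"
    using opt_exists[of n] by blast
  have pmin: "\<And>q. q \<in> Qn1 n \<Longrightarrow> qform f p \<le> qform f q"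
    using pe qform_nonneg by (metis le_add_same_cancel1)
  have "opt_poly f n = p" unfolding opt_poly_def
  proof (rule the1_equality)
    show "\<exists>!p. p \<in> Qn1 n \<and> (\<forall>q\<in>Qn1 n. qform f p \<le> qform f q)"
    proof (rule ex1I[of _ p])
      show "p \<in> Qn1 n \<and> (\<forall>q\<in>Qn1 n. qform f p \<le> qform f q)" using pQ pmin by auto
      fix p' assume p': "p' \<in> Qn1 n \<and> (\<forall>q\<in>Qn1 n. qform f p' \<le> qform f q)"
      then have "qform f p' \<le> qform f p" using pQ by auto
      then have "qform f (p' - p) \<le> 0" using pe[of p'] p' by auto
      then have "p' - p = 0" using qform_pos[of "p' - p"] by fastforce
      then show "p' = p" by simp
    qed
    show "p \<in> Qn1 n \<and> (\<forall>q\<in>Qn1 n. qform f p \<le> qform f q)" using pQ pmin by auto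
  qed
  moreover have "sigma2 f n = qform f p" unfolding sigma2_def
    by (rule cInf_eq_minimum) (use pQ pmin in auto)
  ultimately show "opt_poly f n \<in> Qn1 n" "sigma2 f n = qform f (opt_poly f n)"
    "\<And>q. q \<in> Qn1 n \<Longrightarrow> qform f (opt_poly f n) \<le> qform f q" using pQ pmin by auto
qed

lemma sigma_pos: "sigma2 f n > 0"
proof -
  have "opt_poly f n \<noteq> 0" using opt_props(1)[of n] by (auto simp: Qn1_def)
  then show ?thesis using opt_props(2) qform_pos by simp
qed

lemma key_bound:
  fixes g :: "real \<Rightarrow> real" and M \<epsilon> g0 B :: real
  assumes gm: "set_borel_measurable lborel {-pi..pi} g"
    and gB: "\<forall>x\<in>{-pi..pi}. \<bar>g x\<bar> \<le> B" and M: "M \<ge> 0"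
    and pw: "\<And>x. x \<in> {-pi..pi} \<Longrightarrow> \<bar>g x - g0\<bar> \<le> \<epsilon> + M * (1 - cos x)"
  shows "\<bar>var_mis f g n - g0 * sigma2 f n\<bar> \<le> \<epsilon> * sigma2 f n + 2 * M * (sigma2 f n - sigma2 f (Suc n))"
proof -
  define p where "p = opt_poly f n"
  define \<sigma> where "\<sigma> = sigma2 f n"
  define \<sigma>' where "\<sigma>' = sigma2 f (Suc n)"
  define a where "a x = (cmod (poly p (cis x)))^2" for x
  let ?S = "{-pi..pi}"
  obtain C where C: "\<forall>x\<in>?S. norm (poly p (cis x)) \<le> C" using poly_cis_bdd by blast
  have aC: "\<forall>x\<in>?S. \<bar>a x\<bar> \<le> C^2" using C unfolding a_def by (auto intro!: power_mono)
  have ameas[measurable]: "a \<in> borel_measurable borel" unfolding a_def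
    by (intro borel_measurable_continuous_onI continuous_intros)
  have anonneg: "\<And>x. a x \<ge> 0" unfolding a_def by simp
  have Iw: "set_integrable lborel ?S (\<lambda>x. a x * f x)"
    using qform_integrable[OF fi, of p] unfolding a_def .
  have gm': "(\<lambda>x. indicator ?S x *\<^sub>R g x) \<in> borel_measurable borel"
    using gm unfolding set_borel_measurable_def by simp
  have "set_borel_measurable lborel ?S (\<lambda>x. a x * g x)"
  proof -
    have "(\<lambda>x. indicator ?S x *\<^sub>R (a x * g x)) = (\<lambda>x. a x * (indicator ?S x *\<^sub>R g x))"
      by (auto simp: indicator_def)
    then show ?thesis unfolding set_borel_measurable_def using gm' by simp
  qed
  moreover have "\<forall>x\<in>?S. norm (a x * g x) \<le> C^2 * B"
    using aC gB by (auto simp: abs_mult intro!: mult_mono order.trans[OF abs_ge_zero])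
  ultimately have Ig: "set_integrable lborel ?S (\<lambda>x. a x * g x * f x)"
    using set_integrable_bdd_mult[OF fi] by fastforce
  have "set_borel_measurable lborel ?S (\<lambda>x. a x * cos x)"
    by (rule setmeas_global) measurable
  moreover have "\<forall>x\<in>?S. norm (a x * cos x) \<le> C^2 * 1"
  proof
    fix x assume x: "x \<in> ?S"
    have "\<bar>a x\<bar> * \<bar>cos x\<bar> \<le> \<bar>a x\<bar> * 1" by (rule mult_left_mono) auto
    moreover have "\<bar>a x\<bar> \<le> C^2" using aC x by blast
    ultimately show "norm (a x * cos x) \<le> C^2 * 1" by (simp add: abs_mult)
  qed
  ultimately have Ic: "set_integrable lborel ?S (\<lambda>x. a x * cos x * f x)"
    using set_integrable_bdd_mult[OF fi] by fastforce
  define J where "J = (LINT x:?S|lborel. a x * cos x * f x)"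
  have sig: "\<sigma> = (LINT x:?S|lborel. a x * f x)"
    unfolding \<sigma>_def opt_props(2) p_def qform_def a_def ..
  have var: "var_mis f g n = (LINT x:?S|lborel. a x * g x * f x)"
    unfolding var_mis_def qform_def p_def a_def
    by (rule set_lebesgue_integral_cong) (auto simp: mult_ac)
  have Dint: "set_integrable lborel ?S (\<lambda>x. a x * f x * (g x - g0))"
  proof -
    have "set_integrable lborel ?S (\<lambda>x. a x * g x * f x - g0 * (a x * f x))"
      using Ig Iw by auto
    then show ?thesis by (rule set_integrable_cong[THEN iffD1, rotated -1]) (auto simp: algebra_simps)
  qed
  have D: "(LINT x:?S|lborel. a x * f x * (g x - g0)) = var_mis f g n - g0 * \<sigma>"
  proof -
    have "(LINT x:?S|lborel. a x * f x * (g x - g0)) = (LINT x:?S|lborel. a x * g x * f x - g0 * (a x * f x))"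
      by (rule set_lebesgue_integral_cong) (auto simp: algebra_simps)
    also have "\<dots> = (LINT x:?S|lborel. a x * g x * f x) - (LINT x:?S|lborel. g0 * (a x * f x))"
      by (rule set_integral_diff(2)) (use Ig Iw in auto)
    finally show ?thesis by (simp add: var sig)
  qed
  define R where "R x = \<epsilon> * (a x * f x) + M * (a x * f x) - M * (a x * cos x * f x)" for x
  have IR: "set_integrable lborel ?S R" unfolding R_def using Iw Ic by auto
  have intR: "(LINT x:?S|lborel. R x) = \<epsilon> * \<sigma> + M * \<sigma> - M * J"
    unfolding R_def J_def sig
    by (subst set_integral_diff(2), use Iw Ic in auto)
  have pwR: "\<bar>a x * f x * (g x - g0)\<bar> \<le> R x" if x: "x \<in> ?S" for x
  proof -
    have af: "a x * f x \<ge> 0" using anonneg fnn x by auto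
    have "\<bar>a x * f x * (g x - g0)\<bar> = a x * f x * \<bar>g x - g0\<bar>" using af by (simp only: abs_mult[of "a x * f x"] abs_of_nonneg)
    also have "\<dots> \<le> a x * f x * (\<epsilon> + M * (1 - cos x))" using af pw[OF x] by (rule mult_left_mono[rotated])
    also have "\<dots> = R x" unfolding R_def by (simp add: algebra_simps)
    finally show ?thesis .
  qed
  have up: "(LINT x:?S|lborel. a x * f x * (g x - g0)) \<le> (LINT x:?S|lborel. R x)"
    using Dint IR pwR by (intro set_integral_mono) (auto simp: abs_le_iff)
  have IRn: "set_integrable lborel ?S (\<lambda>x. - R x)"
    using set_integrable_mult_right[of "-1" lborel ?S R] IR by simp
  have lo: "(LINT x:?S|lborel. - R x) \<le> (LINT x:?S|lborel. a x * f x * (g x - g0))"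
  proof (rule set_integral_mono[OF IRn Dint])
    fix x assume "x \<in> ?S"
    from pwR[OF this] show "- R x \<le> a x * f x * (g x - g0)" by (simp add: abs_le_iff)
  qed
  then have lo': "- (LINT x:?S|lborel. R x) \<le> (LINT x:?S|lborel. a x * f x * (g x - g0))"
    using set_integral_uminus[OF IR] by simp
  define q where "q = p * [:1/2, 1/2:]"
  have qQ: "q \<in> Qn1 (Suc n)"
  proof -
    have "degree q \<le> degree p + 1" unfolding q_def using degree_mult_le[of p "[:1/2, 1/2:]"] by simp
    moreover have "degree p \<le> n" "poly p 1 = 1" using opt_props(1)[of n] by (auto simp: Qn1_def p_def)
    ultimately show ?thesis unfolding Qn1_def q_def by auto
  qed
  have s'le: "\<sigma>' \<le> qform f q" unfolding \<sigma>'_def opt_props(2) using opt_props(3)[OF qQ] .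
  have qf: "qform f q = (LINT x:?S|lborel. (1/2) * (a x * f x) + (1/2) * (a x * cos x * f x))"
    unfolding qform_def
  proof (rule set_lebesgue_integral_cong)
    show "?S \<in> sets lborel" by simp
    show "\<forall>x. x \<in> ?S \<longrightarrow> (cmod (poly q (cis x)))\<^sup>2 * f x = 1/2 * (a x * f x) + 1/2 * (a x * cos x * f x)"
    proof (intro allI impI)
      fix x
      have "(cmod (1/2 + 1/2 * cis x))^2 = (1 + cos x) / 2"
        unfolding cmod_power2 by (simp add: power2_eq_square algebra_simps sin_squared_eq) (simp add: field_simps)
      moreover have e1: "poly q (cis x) = poly p (cis x) * (1/2 + 1/2 * cis x)"
        unfolding q_def by (simp add: algebra_simps)
      ultimately have h: "(cmod (poly q (cis x)))^2 = a x * ((1 + cos x) / 2)"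
        unfolding a_def by (simp only: e1 norm_mult power_mult_distrib)
      show "(cmod (poly q (cis x)))\<^sup>2 * f x = 1/2 * (a x * f x) + 1/2 * (a x * cos x * f x)"
        by (simp only: h) (simp add: field_simps)
    qed
  qed
  also have "\<dots> = (1/2) * \<sigma> + (1/2) * J"
    unfolding sig J_def by (subst set_integral_add(2)) (use Iw Ic in auto)
  finally have qf': "qform f q = (1/2) * \<sigma> + (1/2) * J" .
  have "M * J \<ge> M * (2 * \<sigma>' - \<sigma>)" using s'le qf' M by (intro mult_left_mono) auto
  then have "(LINT x:?S|lborel. R x) \<le> \<epsilon> * \<sigma> + 2 * M * (\<sigma> - \<sigma>')"
    unfolding intR by (simp add: algebra_simps)
  then show ?thesis using up lo' D unfolding \<sigma>_def \<sigma>'_def by linarith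
qed

end


theorem lemma5p3:
  fixes f g :: "real \<Rightarrow> real"
  assumes f_nonneg: "\<And>x. x \<in> {-pi..pi} \<Longrightarrow> f x \<ge> 0"
    and f_int: "set_integrable lborel {-pi..pi} f"
    and f_pos: "(LINT x:{-pi..pi}|lborel. f x) > 0"
    and ratio: "(\<lambda>n. sigma2 f (Suc n) / sigma2 f n) \<longlonglongrightarrow> 1"
    and g_nonneg: "\<And>x. x \<in> {-pi..pi} \<Longrightarrow> g x \<ge> 0"
    and g_bdd: "\<exists>B. \<forall>x \<in> {-pi..pi}. g x \<le> B"
    and g_meas: "set_borel_measurable lborel {-pi..pi} g"
    and g_cont: "continuous (at 0 within {-pi..pi}) g"
  shows "(\<lambda>n. var_mis f g n / sigma2 f n) \<longlonglongrightarrow> g 0"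
proof (rule tendstoI)
  fix e :: real assume e: "e > 0"
  let ?S = "{-pi..pi}"
  have sp: "\<And>n. sigma2 f n > 0" using sigma_pos[OF f_int f_nonneg f_pos] .
  obtain B where B: "\<forall>x\<in>?S. g x \<le> B" using g_bdd by blast
  have S0: "0 \<in> ?S" by simp
  have g0: "0 \<le> g 0" "g 0 \<le> B" using g_nonneg[OF S0] B S0 by auto
  have gB: "\<forall>x\<in>?S. \<bar>g x\<bar> \<le> B" using B g_nonneg by auto
  obtain d where d: "d > 0" "\<And>x. x \<in> ?S \<Longrightarrow> dist x 0 < d \<Longrightarrow> dist (g x) (g 0) < e/2"
    using g_cont e unfolding continuous_within_eps_delta by (meson half_gt_zero)
  define \<delta> where "\<delta> = min d pi"
  have \<delta>: "0 < \<delta>" "\<delta> \<le> pi" "\<delta> \<le> d" using d(1) pi_gt_zero unfolding \<delta>_def by auto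
  define \<kappa> where "\<kappa> = 1 - cos \<delta>"
  have \<kappa>: "\<kappa> > 0" unfolding \<kappa>_def using cos_monotone_0_pi[of 0 \<delta>] \<delta> by simp
  define M where "M = B / \<kappa>"
  have M: "M \<ge> 0" unfolding M_def using g0 \<kappa> by simp
  have pw: "\<bar>g x - g 0\<bar> \<le> e/2 + M * (1 - cos x)" if x: "x \<in> ?S" for x
  proof (cases "\<bar>x\<bar> < \<delta>")
    case True
    then have "\<bar>g x - g 0\<bar> < e/2" using d(2)[OF x] \<delta>(3) by (simp add: dist_real_def)
    moreover have "M * (1 - cos x) \<ge> 0" using M by simp
    ultimately show ?thesis by linarith
  next
    case False
    have "cos \<bar>x\<bar> \<le> cos \<delta>" using False x \<delta> by (intro cos_monotone_0_pi_le) auto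
    then have "1 - cos x \<ge> \<kappa>" unfolding \<kappa>_def by simp
    then have "M * (1 - cos x) \<ge> M * \<kappa>" using M by (rule mult_left_mono)
    also have "M * \<kappa> = B" unfolding M_def using \<kappa> by simp
    finally have "M * (1 - cos x) \<ge> B" .
    moreover have "\<bar>g x - g 0\<bar> \<le> B"
    proof -
      have "g x \<le> B" using B x by blast
      then show ?thesis using g0 g_nonneg[OF x] by linarith
    qed
    moreover have "e/2 > 0" using e by simp
    ultimately show ?thesis by linarith
  qed
  have "(\<lambda>n. 2 * M * (1 - sigma2 f (Suc n) / sigma2 f n)) \<longlonglongrightarrow> 2 * M * (1 - 1)"
    by (intro tendsto_intros ratio)
  then have "eventually (\<lambda>n. 2 * M * (1 - sigma2 f (Suc n) / sigma2 f n) < e/2) sequentially"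
    using e by (intro order_tendstoD(2)) auto
  then show "eventually (\<lambda>n. dist (var_mis f g n / sigma2 f n) (g 0) < e) sequentially"
  proof (rule eventually_mono)
    fix n assume n: "2 * M * (1 - sigma2 f (Suc n) / sigma2 f n) < e/2"
    have kb: "\<bar>var_mis f g n - g 0 * sigma2 f n\<bar> \<le> e/2 * sigma2 f n + 2 * M * (sigma2 f n - sigma2 f (Suc n))"
      by (rule key_bound[OF f_int f_nonneg f_pos g_meas gB M pw])
    have s: "sigma2 f n > 0" using sp .
    have "dist (var_mis f g n / sigma2 f n) (g 0) = \<bar>var_mis f g n - g 0 * sigma2 f n\<bar> / sigma2 f n"
      using s by (simp add: dist_real_def field_simps)
    also have "\<dots> \<le> (e/2 * sigma2 f n + 2 * M * (sigma2 f n - sigma2 f (Suc n))) / sigma2 f n"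
      using kb s by (intro divide_right_mono) auto
    also have "\<dots> = e/2 + 2 * M * (1 - sigma2 f (Suc n) / sigma2 f n)"
      using s by (simp add: field_simps)
    also have "\<dots> < e" using n by simp
    finally show "dist (var_mis f g n / sigma2 f n) (g 0) < e" .
  qed
qed

end
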